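(* Let $K$ be a field of characteristic $p>3$ and $n\ge1$. For every linear form $f\in O_1(n)^*$, the bilinear form $(a\partial,b\partial)\mapsto f(ab)$ ($a,b\in O_1(n)$) is a commutative $2$-cocycle on the Zassenhaus algebra $W_1(n)$, every commutative $2$-cocycle on $W_1(n)$ is of this form, and the map $f\mapsto[(a\partial,b\partial)\mapsto f(ab)]$ is an isomorphism $O_1(n)^*\cong Z^2_{comm}(W_1(n))$.
   Context: $O_1(n)$ is the divided power algebra with basis $x^{(i)}$, $0\le i\le p^n-1$, and multiplication $x^{(i)}x^{(j)}=\binom{i+j}{j}x^{(i+j)}$ (interpreted as $0$ if $i+j>p^n-1$); $\partial$ is its derivation $\partial(x^{(i)})=x^{(i-1)}$, $\partial(x^{(0)})=0$. The Zassenhaus algebra $W_1(n)=\{a\partial: a\in O_1(n)\}$ has bracket $[a\partial,b\partial]=(a\partial(b)-b\partial(a))\partial$. $Z^2_{comm}(L)$ is the space of symmetric bilinear forms $\varphi:L\times L\to K$ with $\varphi([x,y],z)+\varphi([z,x],y)+\varphi([y,z],x)=0$ for all $x,y,z\in L$. *)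

theory Defs
  imports Main
begin

text \<open>Elements of the divided power algebra O_1(n) over K (with p = char K) are
represented by their coefficient sequences a :: nat \<Rightarrow> 'k w.r.t. the basis
x^(i), 0 \<le> i \<le> p^n - 1, vanishing for i \<ge> p^n.  The Zassenhaus algebra
W_1(n) = O_1(n) \<partial> is identified with O_1(n) via a\<partial> \<leftrightarrow> a.\<close>

definition O1 :: "nat \<Rightarrow> nat \<Rightarrow> (nat \<Rightarrow> 'k::field) set" where
  "O1 p n = {a. \<forall>i\<ge>p^n. a i = 0}"

text \<open>x^(i) x^(j) = binom(i+j, j) x^(i+j), zero if i+j > p^n - 1.\<close>
definition O1_mult :: "nat \<Rightarrow> nat \<Rightarrow> (nat \<Rightarrow> 'k::field) \<Rightarrow> (nat \<Rightarrow> 'k) \<Rightarrow> (nat \<Rightarrow> 'k)" where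
  "O1_mult p n a b = (\<lambda>k. if k < p^n
      then (\<Sum>i\<le>k. of_nat ((k choose i)) * a i * b (k - i)) else 0)"

text \<open>\<partial>(x^(i)) = x^(i-1), \<partial>(x^(0)) = 0.\<close>
definition O1_der :: "nat \<Rightarrow> nat \<Rightarrow> (nat \<Rightarrow> 'k::field) \<Rightarrow> (nat \<Rightarrow> 'k)" where
  "O1_der p n a = (\<lambda>i. if i + 1 < p^n then a (i + 1) else 0)"

definition W1_bracket :: "nat \<Rightarrow> nat \<Rightarrow> (nat \<Rightarrow> 'k::field) \<Rightarrow> (nat \<Rightarrow> 'k) \<Rightarrow> (nat \<Rightarrow> 'k)" where
  "W1_bracket p n a b = (\<lambda>i. O1_mult p n a (O1_der p n b) i - O1_mult p n b (O1_der p n a) i)"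

definition lin_forms :: "(nat \<Rightarrow> 'k::field) set \<Rightarrow> ((nat \<Rightarrow> 'k) \<Rightarrow> 'k) set" where
  "lin_forms V = {f. (\<forall>a\<in>V. \<forall>b\<in>V. f (\<lambda>i. a i + b i) = f a + f b)
                   \<and> (\<forall>c. \<forall>a\<in>V. f (\<lambda>i. c * a i) = c * f a)
                   \<and> (\<forall>a. a \<notin> V \<longrightarrow> f a = 0)}"

definition bil_forms :: "(nat \<Rightarrow> 'k::field) set \<Rightarrow> ((nat \<Rightarrow> 'k) \<Rightarrow> (nat \<Rightarrow> 'k) \<Rightarrow> 'k) set" where
  "bil_forms V = {\<phi>. (\<forall>a\<in>V. \<phi> a \<in> lin_forms V) \<and> (\<forall>b\<in>V. (\<lambda>a. \<phi> a b) \<in> lin_forms V)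
                   \<and> (\<forall>a b. a \<notin> V \<or> b \<notin> V \<longrightarrow> \<phi> a b = 0)}"

definition Z2comm_W1 :: "nat \<Rightarrow> nat \<Rightarrow> ((nat \<Rightarrow> 'k::field) \<Rightarrow> (nat \<Rightarrow> 'k) \<Rightarrow> 'k) set" where
  "Z2comm_W1 p n = {\<phi>. \<phi> \<in> bil_forms (O1 p n)
      \<and> (\<forall>x\<in>O1 p n. \<forall>y\<in>O1 p n. \<phi> x y = \<phi> y x)
      \<and> (\<forall>x\<in>O1 p n. \<forall>y\<in>O1 p n. \<forall>z\<in>O1 p n.
           \<phi> (W1_bracket p n x y) z + \<phi> (W1_bracket p n z x) y + \<phi> (W1_bracket p n y z) x = 0)}"

definition cocycle_of :: "nat \<Rightarrow> nat \<Rightarrow> ((nat \<Rightarrow> 'k::field) \<Rightarrow> 'k) \<Rightarrow> ((nat \<Rightarrow> 'k) \<Rightarrow> (nat \<Rightarrow> 'k) \<Rightarrow> 'k)" where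
  "cocycle_of p n f = (\<lambda>a b. if a \<in> O1 p n \<and> b \<in> O1 p n then f (O1_mult p n a b) else 0)"

end

theory Submission imports Defs begin

lemma mult_comm: "O1_mult p n a b = O1_mult p n b a"
proof (rule ext)
  fix k
  have "(\<Sum>i\<le>k. of_nat (k choose i) * a i * b (k - i)) =
        (\<Sum>i\<le>k. of_nat (k choose (k - i)) * a (k - i) * b (k - (k - i)))"
    using sum.atLeastAtMost_rev[of "\<lambda>i. of_nat (k choose i) * a i * b (k - i)" 0 k]
    by (simp add: atMost_atLeast0)
  also have "\<dots> = (\<Sum>i\<le>k. of_nat (k choose i) * b i * a (k - i))"
    by (rule sum.cong) (auto simp: binomial_symmetric[symmetric] mult_ac)
  finally show "O1_mult p n a b k = O1_mult p n b a k"
    by (simp add: O1_mult_def)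
qed

lemma tri_swap:
  fixes F :: "nat \<Rightarrow> nat \<Rightarrow> 'a::comm_monoid_add"
  shows "(\<Sum>i\<le>k. \<Sum>j\<le>i. F i j) = (\<Sum>j\<le>k. \<Sum>m\<le>k-j. F (j+m) j)"
proof -
  have "(\<Sum>i\<le>k. \<Sum>j\<le>i. F i j) = (\<Sum>i\<le>k. \<Sum>j\<le>k. if j \<le> i then F i j else 0)"
  proof (rule sum.cong[OF refl])
    fix i assume "i \<in> {..k}"
    then have "{..k} \<inter> {..i} = {..i}" by auto
    then show "(\<Sum>j\<le>i. F i j) = (\<Sum>j\<le>k. if j \<le> i then F i j else 0)"
      using sum.inter_restrict[of "{..k}" "\<lambda>j. F i j" "{..i}"] by simp
  qed
  also have "\<dots> = (\<Sum>j\<le>k. \<Sum>i\<le>k. if j \<le> i then F i j else 0)"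
    by (rule sum.swap)
  also have "\<dots> = (\<Sum>j\<le>k. \<Sum>m\<le>k-j. F (j+m) j)"
  proof (rule sum.cong[OF refl])
    fix j assume j: "j \<in> {..k}"
    have "(\<Sum>i\<le>k. if j \<le> i then F i j else 0) = (\<Sum>i\<in>{j..k}. F i j)"
    proof -
      have "{..k} \<inter> {j..} = {j..k}" by auto
      then show ?thesis
        using sum.inter_restrict[of "{..k}" "\<lambda>i. F i j" "{j..}"] by simp
    qed
    also have "\<dots> = (\<Sum>m\<le>k-j. F (j+m) j)"
    proof -
      have "(\<Sum>i\<in>{j..k}. F i j) = (\<Sum>i\<in>(\<lambda>m. j + m) ` {..k-j}. F i j)"
        proof (intro sum.cong refl)
        show "{j..k} = (\<lambda>m. j + m) ` {..k-j}"
        proof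
          show "{j..k} \<subseteq> (\<lambda>m. j + m) ` {..k-j}"
          proof
            fix x assume "x \<in> {j..k}"
            then show "x \<in> (\<lambda>m. j + m) ` {..k-j}" by (intro image_eqI[of _ _ "x - j"]) auto
          qed
        qed (use j in auto)
      qed
      also have "\<dots> = (\<Sum>m\<le>k-j. F (j+m) j)"
        by (subst sum.reindex) (auto simp: inj_on_def)
      finally show ?thesis .
    qed
    finally show "(\<Sum>i\<le>k. if j \<le> i then F i j else 0) = (\<Sum>m\<le>k-j. F (j+m) j)" .
  qed
  finally show ?thesis .
qed

lemma mult_assoc: "O1_mult p n (O1_mult p n a b) c = O1_mult p n a (O1_mult p n b c)"
proof (rule ext)
  fix k
  show "O1_mult p n (O1_mult p n a b) c k = O1_mult p n a (O1_mult p n b c) k"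
  proof (cases "k < p^n")
    case False then show ?thesis by (simp add: O1_mult_def)
  next
    case True
    have L: "O1_mult p n (O1_mult p n a b) c k =
      (\<Sum>i\<le>k. \<Sum>j\<le>i. of_nat (k choose i) * of_nat (i choose j) * a j * b (i - j) * c (k - i))"
      using True by (auto simp: O1_mult_def sum_distrib_left sum_distrib_right mult_ac intro!: sum.cong)
    have R: "O1_mult p n a (O1_mult p n b c) k =
      (\<Sum>j\<le>k. \<Sum>m\<le>k-j. of_nat (k choose j) * of_nat ((k - j) choose m) * a j * b m * c (k - j - m))"
      using True by (auto simp: O1_mult_def sum_distrib_left sum_distrib_right mult_ac intro!: sum.cong)
    show ?thesis unfolding L R tri_swap
    proof (intro sum.cong refl)
      fix j m assume j: "j \<in> {..k}" and m: "m \<in> {..k-j}"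
      have "(k choose (j+m)) * ((j+m) choose j) = (k choose j) * ((k - j) choose m)"
        using choose_mult[of j "j+m" k] j m by auto
      then have "(of_nat (k choose (j+m)) :: 'a) * of_nat ((j+m) choose j) = of_nat (k choose j) * of_nat ((k - j) choose m)"
        by (metis of_nat_mult)
      moreover have "k - (j + m) = k - j - m" by simp
      ultimately show "of_nat (k choose (j + m)) * of_nat ((j + m) choose j) * a j * b (j + m - j) * c (k - (j + m)) =
         of_nat (k choose j) * of_nat ((k - j) choose m) * a j * b m * c (k - j - m)"
        by (simp add: mult_ac)
    qed
  qed
qed


lemma O1_mult_in[simp]: "O1_mult p n a b \<in> O1 p n"
  by (simp add: O1_def O1_mult_def)
lemma O1_der_in[simp]: "O1_der p n a \<in> O1 p n"
  by (simp add: O1_def O1_der_def)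
lemma W1_in[simp]: "W1_bracket p n a b \<in> O1 p n"
  by (simp add: O1_def W1_bracket_def O1_mult_def)
lemma O1_add[simp]: "a \<in> O1 p n \<Longrightarrow> b \<in> O1 p n \<Longrightarrow> (\<lambda>i. a i + b i) \<in> O1 p n"
  by (simp add: O1_def)
lemma O1_smult[simp]: "a \<in> O1 p n \<Longrightarrow> (\<lambda>i. c * a i) \<in> O1 p n"
  by (simp add: O1_def)
lemma O1_zero[simp]: "(\<lambda>i. 0) \<in> O1 p n"
  by (simp add: O1_def)

lemma mult_add_left: "O1_mult p n (\<lambda>i. a i + b i) c = (\<lambda>k. O1_mult p n a c k + O1_mult p n b c k)"
  by (auto simp: O1_mult_def algebra_simps sum.distrib)
lemma mult_diff_left: "O1_mult p n (\<lambda>i. a i - b i) c = (\<lambda>k. O1_mult p n a c k - O1_mult p n b c k)"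
  by (auto simp: O1_mult_def algebra_simps sum_subtractf)
lemma mult_smult_left: "O1_mult p n (\<lambda>i. d * a i) c = (\<lambda>k. d * O1_mult p n a c k)"
  by (auto simp: O1_mult_def algebra_simps sum_distrib_left)
lemma mult_add_right: "O1_mult p n c (\<lambda>i. a i + b i) = (\<lambda>k. O1_mult p n c a k + O1_mult p n c b k)"
  using mult_add_left[of p n a b c] mult_comm[of p n c] by (metis (no_types) mult_comm)
lemma mult_smult_right: "O1_mult p n c (\<lambda>i. d * a i) = (\<lambda>k. d * O1_mult p n c a k)"
  by (metis (no_types) mult_smult_left mult_comm)

lemma lin_zero: "f \<in> lin_forms V \<Longrightarrow> a \<in> V \<Longrightarrow> f (\<lambda>i. 0) = 0"
proof -
  assume f: "f \<in> lin_forms V" and a: "a \<in> V"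
  have "f (\<lambda>i. 0 * a i) = 0 * f a" using f a unfolding lin_forms_def by blast
  then show ?thesis by simp
qed

lemma cyc_pointwise:
  "(\<lambda>k. O1_mult p n (W1_bracket p n x y) z k + O1_mult p n (W1_bracket p n z x) y k
        + O1_mult p n (W1_bracket p n y z) x k) = (\<lambda>k. 0)"
proof -
  have A: "\<And>a b c. O1_mult p n (O1_mult p n a (O1_der p n b)) c = O1_mult p n (O1_der p n b) (O1_mult p n a c)"
    by (metis mult_assoc mult_comm)
  show ?thesis
  proof (rule ext)
    fix k
    have e: "\<And>a b. O1_mult p n a b k = O1_mult p n b a k" by (simp add: mult_comm)
    show "O1_mult p n (W1_bracket p n x y) z k + O1_mult p n (W1_bracket p n z x) y k
        + O1_mult p n (W1_bracket p n y z) x k = 0"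
      unfolding W1_bracket_def mult_diff_left A
      unfolding mult_comm[of p n z x] mult_comm[of p n y x] mult_comm[of p n z y] by simp
  qed
qed

lemma part1:
  fixes f :: "(nat \<Rightarrow> 'k::field) \<Rightarrow> 'k"
  assumes f: "f \<in> lin_forms (O1 p n)" and ne: "(O1 p n :: (nat \<Rightarrow> 'k) set) \<noteq> {}"
  shows "cocycle_of p n f \<in> Z2comm_W1 p n"
proof -
  obtain a0 :: "nat \<Rightarrow> 'k" where a0: "a0 \<in> O1 p n" using ne by blast
  have fadd: "\<And>a b. a \<in> O1 p n \<Longrightarrow> b \<in> O1 p n \<Longrightarrow> f (\<lambda>i. a i + b i) = f a + f b"
    and fsm: "\<And>c a. a \<in> O1 p n \<Longrightarrow> f (\<lambda>i. c * a i) = c * f a"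
    using f unfolding lin_forms_def by auto
  have bil: "cocycle_of p n f \<in> bil_forms (O1 p n)"
    unfolding bil_forms_def lin_forms_def cocycle_of_def
    apply (intro CollectI conjI ballI allI impI)
    apply (simp_all only: mult_add_left mult_add_right mult_smult_left mult_smult_right)
    apply (auto simp: fadd fsm)
    done
  have sym: "\<forall>x\<in>O1 p n. \<forall>y\<in>O1 p n. cocycle_of p n f x y = cocycle_of p n f y x"
    by (simp add: cocycle_of_def mult_comm)
  have cyc: "\<forall>x\<in>O1 p n. \<forall>y\<in>O1 p n. \<forall>z\<in>O1 p n.
     cocycle_of p n f (W1_bracket p n x y) z + cocycle_of p n f (W1_bracket p n z x) y
      + cocycle_of p n f (W1_bracket p n y z) x = 0"
  proof (intro ballI)
    fix x y z :: "nat \<Rightarrow> 'k" assume xyz: "x \<in> O1 p n" "y \<in> O1 p n" "z \<in> O1 p n"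
    have "cocycle_of p n f (W1_bracket p n x y) z + cocycle_of p n f (W1_bracket p n z x) y
      + cocycle_of p n f (W1_bracket p n y z) x
      = f (\<lambda>k. O1_mult p n (W1_bracket p n x y) z k + O1_mult p n (W1_bracket p n z x) y k
        + O1_mult p n (W1_bracket p n y z) x k)"
      using xyz by (simp add: cocycle_of_def fadd)
    also have "\<dots> = 0" unfolding cyc_pointwise using lin_zero[OF f a0] .
    finally show "cocycle_of p n f (W1_bracket p n x y) z + cocycle_of p n f (W1_bracket p n z x) y
      + cocycle_of p n f (W1_bracket p n y z) x = 0" .
  qed
  show ?thesis unfolding Z2comm_W1_def using bil sym cyc by blast
qed


definition ee :: "nat \<Rightarrow> nat \<Rightarrow> 'k::field" where
  "ee i = (\<lambda>k. if k = i then 1 else 0)"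

lemma ee_in[simp]: "i < p^n \<Longrightarrow> ee i \<in> O1 p n"
  by (simp add: O1_def ee_def)

lemma mult_ee: "O1_mult p n (ee i) b = (\<lambda>k. if k < p^n \<and> i \<le> k then of_nat (k choose i) * b (k - i) else 0)"
proof (rule ext)
  fix k
  have "(\<Sum>l\<le>k. of_nat (k choose l) * ee i l * b (k - l)) =
        (\<Sum>l\<le>k. if l = i then of_nat (k choose i) * b (k - i) else 0)"
    by (rule sum.cong) (auto simp: ee_def)
  also have "\<dots> = (if i \<le> k then of_nat (k choose i) * b (k - i) else 0)"
    by (simp add: sum.delta)
  finally show "O1_mult p n (ee i) b k = (if k < p^n \<and> i \<le> k then of_nat (k choose i) * b (k - i) else 0)"
    by (simp add: O1_mult_def)
qed

lemma unit_ee: "a \<in> O1 p n \<Longrightarrow> O1_mult p n (ee 0) a = a"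
  by (auto simp: mult_ee O1_def)

lemma der_ee: "O1_der p n (ee j) = (\<lambda>k. if k + 1 < p^n \<and> k + 1 = j then 1 else 0)"
  by (auto simp: O1_der_def ee_def)

lemma brk_ee:
  assumes "i < p^n" "j < p^n"
  shows "W1_bracket p n (ee i :: nat \<Rightarrow> 'k::field) (ee j) = (\<lambda>k.
     (if k < p^n \<and> 1 \<le> j \<and> k + 1 = i + j then of_nat (k choose i) else 0)
   - (if k < p^n \<and> 1 \<le> i \<and> k + 1 = i + j then of_nat (k choose j) else 0))"
proof -
  have t: "\<And>i j k. i < p^n \<Longrightarrow> j < p^n \<Longrightarrow> O1_mult p n (ee i) (O1_der p n (ee j)) k =
     (if k < p^n \<and> 1 \<le> j \<and> k + 1 = i + j then of_nat (k choose i) else (0::'k))"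
  proof -
    fix i j k :: nat assume ij: "i < p^n" "j < p^n"
    show "O1_mult p n (ee i) (O1_der p n (ee j)) k =
     (if k < p^n \<and> 1 \<le> j \<and> k + 1 = i + j then of_nat (k choose i) else (0::'k))"
      unfolding mult_ee der_ee using ij by simp linarith
  qed
  show ?thesis unfolding W1_bracket_def using t assms by (simp add: add.commute)
qed

lemma lin_basis_zero:
  fixes g :: "(nat \<Rightarrow> 'k::field) \<Rightarrow> 'k"
  assumes g: "g \<in> lin_forms (O1 p n)" and z: "\<And>i. i < p^n \<Longrightarrow> g (ee i) = 0"
  shows "g a = 0"
proof (cases "a \<in> O1 p n")
  case False then show ?thesis using g by (simp add: lin_forms_def)
next
  case True
  have gadd: "\<And>a b. a \<in> O1 p n \<Longrightarrow> b \<in> O1 p n \<Longrightarrow> g (\<lambda>i. a i + b i) = g a + g b"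
    and gsm: "\<And>c a. a \<in> O1 p n \<Longrightarrow> g (\<lambda>i. c * a i) = c * g a"
    using g unfolding lin_forms_def by auto
  have "\<And>S. finite S \<Longrightarrow> S \<subseteq> {..<p^n} \<Longrightarrow>
      (\<lambda>k. \<Sum>i\<in>S. a i * ee i k) \<in> O1 p n \<and> g (\<lambda>k. \<Sum>i\<in>S. a i * ee i k) = 0"
  proof -
    fix S :: "nat set"
    show "finite S \<Longrightarrow> S \<subseteq> {..<p^n} \<Longrightarrow>
      (\<lambda>k. \<Sum>i\<in>S. a i * ee i k) \<in> O1 p n \<and> g (\<lambda>k. \<Sum>i\<in>S. a i * ee i k) = 0"
    proof (induction S rule: finite_induct)
      case empty
      then show ?case using lin_zero[OF g O1_zero] by simp
    next
      case (insert x S)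
      then have x: "x < p^n" and IH: "(\<lambda>k. \<Sum>i\<in>S. a i * ee i k) \<in> O1 p n"
           "g (\<lambda>k. \<Sum>i\<in>S. a i * ee i k) = 0" by auto
      have m: "(\<lambda>k. a x * ee x k) \<in> O1 p n" using x by simp
      have eq: "(\<lambda>k. \<Sum>i\<in>insert x S. a i * ee i k) = (\<lambda>k. a x * ee x k + (\<Sum>i\<in>S. a i * ee i k))"
        using insert.hyps by simp
      show ?case unfolding eq
        using gadd[OF m IH(1)] gsm[OF ee_in[OF x]] IH z[OF x] m by simp
    qed
  qed
  from this[of "{..<p^n}"] have "g (\<lambda>k. \<Sum>i\<in>{..<p^n}. a i * ee i k) = 0" by simp
  moreover have "(\<lambda>k. \<Sum>i\<in>{..<p^n}. a i * ee i k) = a"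
  proof (rule ext)
    fix k
    have "(\<Sum>i\<in>{..<p^n}. a i * ee i k) = (\<Sum>i\<in>{..<p^n}. if k = i then a k else 0)"
      by (rule sum.cong) (auto simp: ee_def)
    also have "\<dots> = a k" using True by (auto simp: sum.delta O1_def)
    finally show "(\<Sum>i\<in>{..<p^n}. a i * ee i k) = a k" .
  qed
  ultimately show ?thesis by simp
qed

lemma bil_basis_zero:
  fixes \<psi> :: "(nat \<Rightarrow> 'k::field) \<Rightarrow> (nat \<Rightarrow> 'k) \<Rightarrow> 'k"
  assumes b: "\<psi> \<in> bil_forms (O1 p n)"
    and z: "\<And>i j. i < p^n \<Longrightarrow> j < p^n \<Longrightarrow> \<psi> (ee i) (ee j) = 0"
  shows "\<psi> a c = 0"
proof (cases "c \<in> O1 p n")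
  case False then show ?thesis using b by (simp add: bil_forms_def)
next
  case True
  have b1: "\<And>a. a \<in> O1 p n \<Longrightarrow> \<psi> a \<in> lin_forms (O1 p n)"
    and b2: "\<And>c. c \<in> O1 p n \<Longrightarrow> (\<lambda>a. \<psi> a c) \<in> lin_forms (O1 p n)"
    using b unfolding bil_forms_def by blast+
  have r: "\<And>i b'. i < p^n \<Longrightarrow> \<psi> (ee i) b' = 0"
  proof -
    fix i b' assume i: "i < (p::nat)^n"
    show "\<psi> (ee i) b' = 0"
      by (rule lin_basis_zero[OF b1[OF ee_in[OF i]]]) (rule z[OF i])
  qed
  show ?thesis
    by (rule lin_basis_zero[OF b2[OF True]]) (rule r)
qed


lemma brk_0i:
  assumes i: "1 \<le> i" "i < p^n"
  shows "W1_bracket p n (ee 0) (ee i) = (ee (i - 1) :: nat \<Rightarrow> 'k::field)"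
proof -
  have "0 < p^n" using i by linarith
  show ?thesis unfolding brk_ee[OF \<open>0 < p^n\<close> i(2)]
    using i by (auto simp: ee_def intro!: ext)
qed

lemma brk_j0:
  assumes i: "1 \<le> j" "j < p^n"
  shows "W1_bracket p n (ee j) (ee 0) = (\<lambda>k. (-1) * (ee (j - 1) k :: 'k::field))"
proof -
  have "0 < p^n" using i by linarith
  show ?thesis unfolding brk_ee[OF i(2) \<open>0 < p^n\<close>]
    using i by (auto simp: ee_def intro!: ext)
qed

lemma brk_1j: "1 \<le> j \<Longrightarrow> j < p^n \<Longrightarrow> W1_bracket p n (ee 1) (ee j) = (\<lambda>k. (of_nat j - 1) * (ee j k :: 'k::field))"
  by (subst brk_ee) (auto simp: ee_def intro!: ext)

lemma brk_k1: "1 \<le> j \<Longrightarrow> j < p^n \<Longrightarrow> W1_bracket p n (ee j) (ee 1) = (\<lambda>k. (1 - of_nat j) * (ee j k :: 'k::field))"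
  by (subst brk_ee) (auto simp: ee_def intro!: ext)

lemma brk_big: "i < p^n \<Longrightarrow> j < p^n \<Longrightarrow> p^n + 1 \<le> i + j \<Longrightarrow> W1_bracket p n (ee i) (ee j) = (\<lambda>k. 0 :: 'k::field)"
  by (subst brk_ee) (auto intro!: ext)


lemma brk_2:
  assumes N: "4 \<le> p^n"
  shows "W1_bracket p n (ee 2) (ee (p^n - 2)) =
     (\<lambda>k. (of_nat ((p^n - 1) choose 2) - of_nat ((p^n - 1) choose (p^n - 2))) * (ee (p^n - 1) k :: 'k::field))"
proof -
  have a: "2 < p^n" "p^n - 2 < p^n" using N by auto
  show ?thesis unfolding brk_ee[OF a]
  proof (rule ext)
    fix k
    show "(if k < p ^ n \<and> 1 \<le> p ^ n - 2 \<and> k + 1 = 2 + (p ^ n - 2) then of_nat (k choose 2) else 0) -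
          (if k < p ^ n \<and> 1 \<le> (2::nat) \<and> k + 1 = 2 + (p ^ n - 2) then of_nat (k choose (p ^ n - 2)) else 0) =
          (of_nat ((p^n - 1) choose 2) - of_nat ((p^n - 1) choose (p^n - 2))) * (ee (p^n - 1) k :: 'k)"
    proof (cases "k = p^n - 1")
      case True
      then have k: "k < p^n" "1 \<le> p^n - 2" "k + 1 = 2 + (p^n - 2)" "1 \<le> (2::nat)" using N by auto
      show ?thesis by (simp only: k simp_thms if_True) (simp add: ee_def True)
    next
      case False
      then have "k + 1 \<noteq> 2 + (p ^ n - 2)" using N by auto
      then show ?thesis using False by (simp add: ee_def)
    qed
  qed
qed

lemma const2:
  assumes N: "4 \<le> N" and N0: "(of_nat N :: 'k::field) = 0" and two: "(2::'k) \<noteq> 0"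
  shows "(of_nat ((N - 1) choose 2) - of_nat ((N - 1) choose (N - 2)) :: 'k) = 2"
proof -
  have c1: "(N - 1) choose (N - 2) = N - 1"
  proof -
    have "(N - 1) choose (N - 2) = (N - 1) choose ((N - 1) - (N - 2))"
      by (rule binomial_symmetric) (use N in simp)
    also have "(N - 1) - (N - 2) = 1" using N by simp
    finally show ?thesis by simp
  qed
  have "2 * ((N - 1) choose 2) = (N - 1) * (N - 2)"
  proof -
    have "even ((N - 1) * (N - 1 - 1))" by simp
    moreover have "N - 1 - 1 = N - 2" by simp
    ultimately show ?thesis by (simp add: choose_two)
  qed
  then have "(2::'k) * of_nat ((N - 1) choose 2) = of_nat (N - 1) * of_nat (N - 2)"
    by (metis of_nat_mult of_nat_numeral)
  also have "\<dots> = 2"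
  proof -
    have "(of_nat (N - 1) :: 'k) = of_nat N - 1" using N by (simp add: of_nat_diff)
    moreover have "(of_nat (N - 2) :: 'k) = of_nat N - 2" using N by (simp add: of_nat_diff)
    ultimately show ?thesis using N0 by simp
  qed
  finally have "of_nat ((N - 1) choose 2) = (1::'k)"
    using two by (metis mult.right_neutral mult_left_cancel)
  moreover have "(of_nat ((N - 1) choose (N - 2)) :: 'k) = -1"
    using c1 N N0 by (simp add: of_nat_diff)
  ultimately show ?thesis by simp
qed

lemma vanish:
  fixes \<psi> :: "(nat \<Rightarrow> 'k::field) \<Rightarrow> (nat \<Rightarrow> 'k) \<Rightarrow> 'k"
  assumes Z: "\<psi> \<in> Z2comm_W1 p n" and z0: "\<And>b. \<psi> (ee 0) b = 0"
    and N4: "4 \<le> p^n" and N0: "(of_nat (p^n) :: 'k) = 0" and two: "(2::'k) \<noteq> 0" and three: "(3::'k) \<noteq> 0"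
  shows "i < p^n \<Longrightarrow> j < p^n \<Longrightarrow> \<psi> (ee i) (ee j) = 0"
proof -
  define N where "N = p^n"
  have bil: "\<psi> \<in> bil_forms (O1 p n)"
    and sym: "\<And>(x::nat\<Rightarrow>'k) y. x \<in> O1 p n \<Longrightarrow> y \<in> O1 p n \<Longrightarrow> \<psi> x y = \<psi> y x"
    and cyc: "\<And>(x::nat\<Rightarrow>'k) y z. x \<in> O1 p n \<Longrightarrow> y \<in> O1 p n \<Longrightarrow> z \<in> O1 p n \<Longrightarrow>
       \<psi> (W1_bracket p n x y) z + \<psi> (W1_bracket p n z x) y + \<psi> (W1_bracket p n y z) x = 0"
    using Z unfolding Z2comm_W1_def by auto
  have sm: "\<And>c (a::nat\<Rightarrow>'k) (b::nat\<Rightarrow>'k). a \<in> O1 p n \<Longrightarrow> b \<in> O1 p n \<Longrightarrow> \<psi> (\<lambda>k. c * a k) b = c * \<psi> a b"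
  proof -
    fix c and a b :: "nat \<Rightarrow> 'k" assume ab: "a \<in> O1 p n" "b \<in> O1 p n"
    have "(\<lambda>a. \<psi> a b) \<in> lin_forms (O1 p n)" using bil ab unfolding bil_forms_def by blast
    then show "\<psi> (\<lambda>k. c * a k) b = c * \<psi> a b" using ab unfolding lin_forms_def by blast
  qed
  have ein: "\<And>i. i < N \<Longrightarrow> (ee i :: nat \<Rightarrow> 'k) \<in> O1 p n" unfolding N_def by simp
  have N4': "4 \<le> N" and N0': "(of_nat N :: 'k) = 0" using N4 N0 by (auto simp: N_def)
  have zr: "\<And>b::nat\<Rightarrow>'k. b \<in> O1 p n \<Longrightarrow> \<psi> (\<lambda>k. 0) b = 0"
    using sm[of "ee 0" _ 0] ein[of 0] N4' by simp
  have smE: "\<And>c a b. a < N \<Longrightarrow> b < N \<Longrightarrow> \<psi> (\<lambda>k. c * ee a k) (ee b) = c * \<psi> (ee a) (ee b)"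
    using sm ein by blast
  have symE: "\<And>a b. a < N \<Longrightarrow> b < N \<Longrightarrow> \<psi> (ee a) (ee b) = \<psi> (ee b) (ee a)"
    using sym ein by blast
  have cycE: "\<And>a b c. a < N \<Longrightarrow> b < N \<Longrightarrow> c < N \<Longrightarrow>
       \<psi> (W1_bracket p n (ee a) (ee b)) (ee c) + \<psi> (W1_bracket p n (ee c) (ee a)) (ee b)
     + \<psi> (W1_bracket p n (ee b) (ee c)) (ee a) = 0"
    using cyc ein by blast
  note brks = brk_0i brk_j0 brk_1j brk_k1 brk_big
  have S1: "\<And>i j. 1 \<le> i \<Longrightarrow> 1 \<le> j \<Longrightarrow> i < N \<Longrightarrow> j < N \<Longrightarrow>
      \<psi> (ee (i - 1)) (ee j) = \<psi> (ee i) (ee (j - 1))"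
  proof -
    fix i j assume ij: "1 \<le> i" "1 \<le> j" "i < N" "j < N"
    have "0 < N" using N4' by simp
    have c: "\<psi> (W1_bracket p n (ee i) (ee j)) (ee 0) + \<psi> (W1_bracket p n (ee 0) (ee i)) (ee j)
     + \<psi> (W1_bracket p n (ee j) (ee 0)) (ee i) = 0" using cycE[of i j 0] ij \<open>0 < N\<close> by blast
    have t1: "\<psi> (W1_bracket p n (ee i) (ee j)) (ee 0) = 0"
      using sym[of "W1_bracket p n (ee i) (ee j)" "ee 0"] ein[OF \<open>0 < N\<close>] z0 by simp
    have t2: "W1_bracket p n (ee 0) (ee i) = ee (i - 1)" using brk_0i ij unfolding N_def by blast
    have t3: "\<psi> (W1_bracket p n (ee j) (ee 0)) (ee i) = - \<psi> (ee i) (ee (j - 1))"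
    proof -
      have e: "W1_bracket p n (ee j) (ee 0) = (\<lambda>k. (-1) * (ee (j - 1) k :: 'k))"
        using brk_j0 ij unfolding N_def by blast
      have "\<psi> (W1_bracket p n (ee j) (ee 0)) (ee i) = (-1) * \<psi> (ee (j - 1)) (ee i)"
        unfolding e by (rule smE) (use ij in auto)
      then show ?thesis using symE[of "j - 1" i] ij by simp
    qed
    show "\<psi> (ee (i - 1)) (ee j) = \<psi> (ee i) (ee (j - 1))"
    proof -
      have "0 + \<psi> (ee (i - 1)) (ee j) + - \<psi> (ee i) (ee (j - 1)) = 0"
        using c unfolding t1 t2 t3 .
      then show ?thesis by simp
    qed
  qed
  have S2: "\<And>i j. i + j < N \<Longrightarrow> \<psi> (ee i) (ee j) = 0"
  proof -
    fix i show "\<And>j. i + j < N \<Longrightarrow> \<psi> (ee i) (ee j) = 0"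
    proof (induction i)
      case 0 then show ?case using z0 by simp
    next
      case (Suc i)
      have "\<psi> (ee (Suc i - 1)) (ee (Suc j)) = \<psi> (ee (Suc i)) (ee (Suc j - 1))"
        by (rule S1) (use Suc.prems in auto)
      then show ?case using Suc.IH[of "Suc j"] Suc.prems by simp
    qed
  qed
  have S3: "\<And>d i j. i < N \<Longrightarrow> j < N \<Longrightarrow> i + d = N - 1 \<Longrightarrow> d \<le> j \<Longrightarrow>
      \<psi> (ee i) (ee j) = \<psi> (ee (N - 1)) (ee (j - d))"
  proof -
    fix d show "\<And>i j. i < N \<Longrightarrow> j < N \<Longrightarrow> i + d = N - 1 \<Longrightarrow> d \<le> j \<Longrightarrow>
      \<psi> (ee i) (ee j) = \<psi> (ee (N - 1)) (ee (j - d))"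
    proof (induction d)
      case 0 then show ?case by simp
    next
      case (Suc d i j)
      have h: "1 \<le> Suc i" "1 \<le> j" "Suc i < N" "j < N" "Suc i + d = N - 1" "d \<le> j - 1"
        using Suc.prems by linarith+
      have "\<psi> (ee (Suc i - 1)) (ee j) = \<psi> (ee (Suc i)) (ee (j - 1))"
        using S1[OF h(1,2,3,4)] .
      moreover have "\<psi> (ee (Suc i)) (ee (j - 1)) = \<psi> (ee (N - 1)) (ee (j - 1 - d))"
        using Suc.IH[OF h(3) _ h(5) h(6)] h(4) by linarith
      moreover have "j - 1 - d = j - Suc d" by simp
      ultimately show ?case by simp
    qed
  qed
  define g where "g t = \<psi> (ee (N - 1)) (ee t)" for t
  have G: "\<And>i j. i < N \<Longrightarrow> j < N \<Longrightarrow> N \<le> i + j \<Longrightarrow> \<psi> (ee i) (ee j) = g (i + j + 1 - N)"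
  proof -
    fix i j assume ij: "i < N" "j < N" "N \<le> i + j"
    have h: "i + (N - 1 - i) = N - 1" "N - 1 - i \<le> j" using ij by linarith+
    have "\<psi> (ee i) (ee j) = \<psi> (ee (N - 1)) (ee (j - (N - 1 - i)))"
      by (rule S3[OF ij(1,2) h])
    moreover have "j - (N - 1 - i) = i + j + 1 - N" using ij by linarith
    ultimately show "\<psi> (ee i) (ee j) = g (i + j + 1 - N)" by (simp add: g_def add.commute)
  qed
  have six: "(6::'k) \<noteq> 0"
  proof -
    have "(6::'k) = 2 * 3" by simp
    moreover have "(2::'k) * 3 \<noteq> 0" using two three by (rule no_zero_divisors)
    ultimately show ?thesis by simp
  qed
  have ofN2: "(of_nat (N - 2) :: 'k) = -2" using N4' N0' by (simp add: of_nat_diff)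
  have ofN1: "(of_nat (N - 1) :: 'k) = -1" using N4' N0' by (simp add: of_nat_diff)
  have B1: "\<And>j. 1 \<le> j \<Longrightarrow> j < N \<Longrightarrow> W1_bracket p n (ee 1) (ee j) = (\<lambda>k. (of_nat j - 1) * (ee j k :: 'k))"
    unfolding N_def by (rule brk_1j)
  have Bk: "\<And>j. 1 \<le> j \<Longrightarrow> j < N \<Longrightarrow> W1_bracket p n (ee j) (ee 1) = (\<lambda>k. (1 - of_nat j) * (ee j k :: 'k))"
    unfolding N_def by (rule brk_k1)
  have Bb: "\<And>i j. i < N \<Longrightarrow> j < N \<Longrightarrow> N + 1 \<le> i + j \<Longrightarrow> W1_bracket p n (ee i) (ee j) = (\<lambda>k. 0 :: 'k)"
    unfolding N_def by (rule brk_big)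
  have B2: "W1_bracket p n (ee 2) (ee (N - 2)) = (\<lambda>k. 2 * (ee (N - 1) k :: 'k))"
    using brk_2[OF N4, where 'k='k] const2[OF N4' N0' two] unfolding N_def by simp
  have GG: "\<And>i j t. i < N \<Longrightarrow> j < N \<Longrightarrow> N \<le> i + j \<Longrightarrow> i + j + 1 - N = t \<Longrightarrow> \<psi> (ee i) (ee j) = g t"
    using G by blast
  have S4: "\<And>t. 1 \<le> t \<Longrightarrow> t \<le> N - 1 \<Longrightarrow> g t = 0"
  proof -
    fix t assume t: "1 \<le> t" "t \<le> N - 1"
    consider "t = 1" | "t = N - 1" | "2 \<le> t" "t \<le> N - 2" using t by linarith
    then show "g t = 0"
    proof cases
      case 1
      have c: "\<psi> (W1_bracket p n (ee 1) (ee 2)) (ee (N - 2)) + \<psi> (W1_bracket p n (ee (N - 2)) (ee 1)) (ee 2)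
         + \<psi> (W1_bracket p n (ee 2) (ee (N - 2))) (ee 1) = 0"
        by (rule cycE) (use N4' in auto)
      have a1: "\<psi> (W1_bracket p n (ee 1) (ee 2)) (ee (N - 2)) = (of_nat 2 - 1) * \<psi> (ee 2) (ee (N - 2))"
        using N4' by (subst B1) (auto intro: smE)
      have g1a: "\<psi> (ee 2) (ee (N - 2)) = g 1"
        by (rule GG) (use N4' in linarith)+
      have a2: "\<psi> (W1_bracket p n (ee (N - 2)) (ee 1)) (ee 2) = (1 - of_nat (N - 2)) * \<psi> (ee (N - 2)) (ee 2)"
        using N4' by (subst Bk) (auto intro: smE)
      have g1b: "\<psi> (ee (N - 2)) (ee 2) = g 1"
        by (rule GG) (use N4' in linarith)+
      have a3: "\<psi> (W1_bracket p n (ee 2) (ee (N - 2))) (ee 1) = 2 * g 1"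
        unfolding B2 g_def using N4' by (auto intro: smE)
      have "(2 - 1) * g 1 + (1 - (-2)) * g 1 + 2 * g 1 = 0"
        using c unfolding a1 a2 a3 g1a g1b ofN2 by simp
      then have "6 * g 1 = 0" by (simp add: algebra_simps)
      then show ?thesis using six 1 by simp
    next
      case 2
      have c: "\<psi> (W1_bracket p n (ee 2) (ee (N - 2))) (ee (N - 1)) + \<psi> (W1_bracket p n (ee (N - 1)) (ee 2)) (ee (N - 2))
         + \<psi> (W1_bracket p n (ee (N - 2)) (ee (N - 1))) (ee 2) = 0"
        by (rule cycE) (use N4' in auto)
      have a1: "\<psi> (W1_bracket p n (ee 2) (ee (N - 2))) (ee (N - 1)) = 2 * g (N - 1)"
        unfolding B2 g_def using N4' by (auto intro: smE)
      have a2: "\<psi> (W1_bracket p n (ee (N - 1)) (ee 2)) (ee (N - 2)) = 0"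
        using N4' by (subst Bb) (auto intro!: zr ein)
      have a3: "\<psi> (W1_bracket p n (ee (N - 2)) (ee (N - 1))) (ee 2) = 0"
        using N4' by (subst Bb) (auto intro!: zr ein)
      have "2 * g (N - 1) = 0" using c unfolding a1 a2 a3 by simp
      then show ?thesis using two 2 by simp
    next
      case 3
      have c1: "\<psi> (W1_bracket p n (ee 1) (ee (N - 1))) (ee t) + \<psi> (W1_bracket p n (ee t) (ee 1)) (ee (N - 1))
         + \<psi> (W1_bracket p n (ee (N - 1)) (ee t)) (ee 1) = 0"
        by (rule cycE) (use N4' 3 in auto)
      have a1: "\<psi> (W1_bracket p n (ee 1) (ee (N - 1))) (ee t) = (of_nat (N - 1) - 1) * g t"
        unfolding g_def using N4' 3 by (subst B1) (auto intro: smE)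
      have a2: "\<psi> (W1_bracket p n (ee t) (ee 1)) (ee (N - 1)) = (1 - of_nat t) * g t"
      proof -
        have "\<psi> (W1_bracket p n (ee t) (ee 1)) (ee (N - 1)) = (1 - of_nat t) * \<psi> (ee t) (ee (N - 1))"
          using N4' 3 by (subst Bk) (auto intro: smE)
        moreover have "\<psi> (ee t) (ee (N - 1)) = g t" unfolding g_def using N4' 3 by (intro symE) auto
        ultimately show ?thesis by simp
      qed
      have a3: "\<psi> (W1_bracket p n (ee (N - 1)) (ee t)) (ee 1) = 0"
        using N4' 3 by (subst Bb) (auto intro!: zr ein)
      have e1: "(of_nat (N - 1) - 1) * g t + (1 - of_nat t) * g t = 0" using c1 unfolding a1 a2 a3 by simp
      have c2: "\<psi> (W1_bracket p n (ee 1) (ee (N - 2))) (ee (t + 1)) + \<psi> (W1_bracket p n (ee (t + 1)) (ee 1)) (ee (N - 2))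
         + \<psi> (W1_bracket p n (ee (N - 2)) (ee (t + 1))) (ee 1) = 0"
        by (rule cycE) (use N4' 3 in auto)
      have b1: "\<psi> (W1_bracket p n (ee 1) (ee (N - 2))) (ee (t + 1)) = (of_nat (N - 2) - 1) * g t"
      proof -
        have "\<psi> (W1_bracket p n (ee 1) (ee (N - 2))) (ee (t + 1)) = (of_nat (N - 2) - 1) * \<psi> (ee (N - 2)) (ee (t + 1))"
          using N4' 3 by (subst B1) (auto intro: smE)
        moreover have "\<psi> (ee (N - 2)) (ee (t + 1)) = g t" by (rule GG) (use N4' 3 in linarith)+
        ultimately show ?thesis by simp
      qed
      have b2: "\<psi> (W1_bracket p n (ee (t + 1)) (ee 1)) (ee (N - 2)) = (1 - of_nat (t + 1)) * g t"
      proof -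
        have "\<psi> (W1_bracket p n (ee (t + 1)) (ee 1)) (ee (N - 2)) = (1 - of_nat (t + 1)) * \<psi> (ee (t + 1)) (ee (N - 2))"
          using N4' 3 by (subst Bk) (auto intro!: smE simp del: of_nat_add of_nat_Suc)
        moreover have "\<psi> (ee (t + 1)) (ee (N - 2)) = g t" by (rule GG) (use N4' 3 in linarith)+
        ultimately show ?thesis by simp
      qed
      have b3: "\<psi> (W1_bracket p n (ee (N - 2)) (ee (t + 1))) (ee 1) = 0"
        using N4' 3 by (subst Bb) (auto intro!: zr ein)
      have e2: "(of_nat (N - 2) - 1) * g t + (1 - of_nat (t + 1)) * g t = 0" using c2 unfolding b1 b2 b3 by simp
      have "2 * g t = ((of_nat (N - 1) - 1) * g t + (1 - of_nat t) * g t)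
                   - ((of_nat (N - 2) - 1) * g t + (1 - of_nat (t + 1)) * g t)"
        unfolding ofN1 ofN2 by (simp add: algebra_simps)
      then have "2 * g t = 0 - 0" unfolding e1 e2 .
      then show ?thesis using two by simp
    qed
  qed
  fix i j assume ij: "i < p^n" "j < p^n"
  show "\<psi> (ee i) (ee j) = 0"
  proof (cases "i + j < N")
    case True then show ?thesis using S2 by blast
  next
    case False
    then have "\<psi> (ee i) (ee j) = g (i + j + 1 - N)" using G ij unfolding N_def by simp
    also have "\<dots> = 0" using S4 False ij unfolding N_def by simp
    finally show ?thesis .
  qed
qed


lemma lin_diff: "f \<in> lin_forms V \<Longrightarrow> g \<in> lin_forms V \<Longrightarrow> (\<lambda>a. f a - g a) \<in> lin_forms V"
  unfolding lin_forms_def by (auto simp: algebra_simps)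

lemma Z2_diff:
  assumes "\<phi> \<in> Z2comm_W1 p n" "\<chi> \<in> Z2comm_W1 p n"
  shows "(\<lambda>a b. \<phi> a b - \<chi> a b) \<in> Z2comm_W1 p n"
proof -
  have b: "\<phi> \<in> bil_forms (O1 p n)" "\<chi> \<in> bil_forms (O1 p n)" using assms unfolding Z2comm_W1_def by auto
  have bd: "(\<lambda>a b. \<phi> a b - \<chi> a b) \<in> bil_forms (O1 p n)"
    using b unfolding bil_forms_def by (auto intro!: lin_diff)
  show ?thesis using assms bd unfolding Z2comm_W1_def by (auto simp: algebra_simps)
qed

theorem proposition2p6:
  fixes n :: nat
  assumes "CHAR('k::field) > 3" and "n \<ge> 1"
  defines "p \<equiv> CHAR('k)"
  shows "(\<forall>f \<in> lin_forms (O1 p n :: (nat \<Rightarrow> 'k) set). cocycle_of p n f \<in> Z2comm_W1 p n)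
       \<and> (\<forall>\<phi> \<in> Z2comm_W1 p n. \<exists>f \<in> lin_forms (O1 p n :: (nat \<Rightarrow> 'k) set). \<phi> = cocycle_of p n f)
       \<and> bij_betw (cocycle_of p n) (lin_forms (O1 p n :: (nat \<Rightarrow> 'k) set)) (Z2comm_W1 p n)
       \<and> (\<forall>f \<in> lin_forms (O1 p n :: (nat \<Rightarrow> 'k) set). \<forall>g \<in> lin_forms (O1 p n). \<forall>c::'k.
            cocycle_of p n (\<lambda>a. c * f a + g a) = (\<lambda>a b. c * cocycle_of p n f a b + cocycle_of p n g a b))"
proof -
  have p3: "p > 3" using assms(1) p_def by simp
  have N0: "(of_nat (p^n) :: 'k) = 0" using assms(2) unfolding p_def by (simp add: of_nat_power power_0_left)
  have N4: "4 \<le> p^n"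
  proof -
    have "p \<le> p^n" using assms(2) p3 by (simp add: self_le_power)
    then show ?thesis using p3 by linarith
  qed
  have Npos: "0 < p^n" using N4 by linarith
  have two: "(2::'k) \<noteq> 0"
  proof
    assume "(2::'k) = 0"
    then have "(of_nat 2 :: 'k) = 0" by simp
    then have "p dvd 2" unfolding p_def by (simp only: of_nat_eq_0_iff_char_dvd)
    then show False using p3 by (auto dest: dvd_imp_le)
  qed
  have three: "(3::'k) \<noteq> 0"
  proof
    assume "(3::'k) = 0"
    then have "(of_nat 3 :: 'k) = 0" by simp
    then have "p dvd 3" unfolding p_def by (simp only: of_nat_eq_0_iff_char_dvd)
    then show False using p3 by (auto dest: dvd_imp_le)
  qed
  have ne: "(O1 p n :: (nat \<Rightarrow> 'k) set) \<noteq> {}" using O1_zero by blast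
  have P1: "\<forall>f \<in> lin_forms (O1 p n :: (nat \<Rightarrow> 'k) set). cocycle_of p n f \<in> Z2comm_W1 p n"
    using part1[OF _ ne] by blast
  have P2: "\<forall>\<phi> \<in> Z2comm_W1 p n. \<exists>f \<in> lin_forms (O1 p n :: (nat \<Rightarrow> 'k) set). \<phi> = cocycle_of p n f"
  proof
    fix \<phi> :: "(nat \<Rightarrow> 'k) \<Rightarrow> (nat \<Rightarrow> 'k) \<Rightarrow> 'k" assume \<phi>: "\<phi> \<in> Z2comm_W1 p n"
    have e0: "(ee 0 :: nat \<Rightarrow> 'k) \<in> O1 p n" using Npos by simp
    have bil: "\<phi> \<in> bil_forms (O1 p n)" using \<phi> unfolding Z2comm_W1_def by blast
    define f where "f = \<phi> (ee 0)"
    have f: "f \<in> lin_forms (O1 p n)" using bil e0 unfolding f_def bil_forms_def by blast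
    define \<psi> where "\<psi> = (\<lambda>a b. \<phi> a b - cocycle_of p n f a b)"
    have \<psi>: "\<psi> \<in> Z2comm_W1 p n" unfolding \<psi>_def by (rule Z2_diff[OF \<phi> part1[OF f ne]])
    have z0: "\<And>b. \<psi> (ee 0) b = 0"
    proof -
      fix b :: "nat \<Rightarrow> 'k"
      show "\<psi> (ee 0) b = 0"
      proof (cases "b \<in> O1 p n")
        case True then show ?thesis using e0 by (simp add: \<psi>_def cocycle_of_def unit_ee f_def)
      next
        case False then show ?thesis using bil by (simp add: \<psi>_def cocycle_of_def bil_forms_def)
      qed
    qed
    have "\<And>i j. i < p^n \<Longrightarrow> j < p^n \<Longrightarrow> \<psi> (ee i) (ee j) = 0"
      using vanish[OF \<psi> z0 N4 N0 two three] by blast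
    then have "\<And>a b. \<psi> a b = 0"
      using \<psi> unfolding Z2comm_W1_def by (auto intro: bil_basis_zero)
    then have "\<phi> = cocycle_of p n f" unfolding \<psi>_def by (auto intro!: ext)
    then show "\<exists>f \<in> lin_forms (O1 p n :: (nat \<Rightarrow> 'k) set). \<phi> = cocycle_of p n f" using f by blast
  qed
  have inj: "inj_on (cocycle_of p n) (lin_forms (O1 p n :: (nat \<Rightarrow> 'k) set))"
  proof (rule inj_onI)
    fix f g :: "(nat \<Rightarrow> 'k) \<Rightarrow> 'k"
    assume f: "f \<in> lin_forms (O1 p n)" and g: "g \<in> lin_forms (O1 p n)" and eq: "cocycle_of p n f = cocycle_of p n g"
    have e0: "(ee 0 :: nat \<Rightarrow> 'k) \<in> O1 p n" using Npos by simp
    show "f = g"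
    proof (rule ext)
      fix a
      show "f a = g a"
      proof (cases "a \<in> O1 p n")
        case True
        have "f a = cocycle_of p n f (ee 0) a" using True e0 by (simp add: cocycle_of_def unit_ee)
        also have "\<dots> = cocycle_of p n g (ee 0) a" by (simp add: eq)
        also have "\<dots> = g a" using True e0 by (simp add: cocycle_of_def unit_ee)
        finally show ?thesis .
      next
        case False then show ?thesis using f g by (simp add: lin_forms_def)
      qed
    qed
  qed
  have P3: "bij_betw (cocycle_of p n) (lin_forms (O1 p n :: (nat \<Rightarrow> 'k) set)) (Z2comm_W1 p n)"
    unfolding bij_betw_def using inj P1 P2 by blast
  have P4: "\<forall>f \<in> lin_forms (O1 p n :: (nat \<Rightarrow> 'k) set). \<forall>g \<in> lin_forms (O1 p n). \<forall>c::'k.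
            cocycle_of p n (\<lambda>a. c * f a + g a) = (\<lambda>a b. c * cocycle_of p n f a b + cocycle_of p n g a b)"
    by (auto simp: cocycle_of_def intro!: ext)
  show ?thesis using P1 P2 P3 P4 by blast
qed

end
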